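(* Assume the Objectivity Assumption (for every paper $a$, all reviewers give $a$ the same score vector). Let $p,q \in (1,\infty)$. Then the $L(p,q)$-aggregation method satisfies Consensus. If moreover $p=q$ (so $p=q>1$), the $L(p,q)$-aggregation method satisfies Consistency.
   Context: Peer-review setting: a finite set $\mathcal{R}$ of $n$ reviewers, a finite set $\mathcal{P}$ of $m$ papers, and $d\ge 1$ evaluation criteria. Every reviewer $i$ reviews every paper $a$, giving a score vector $\bar{x}_{ia}\in[0,10]^d$ and a recommendation $y_{ia}\in[0,10]$. A function $h:[0,10]^d\to[0,10]$ is monotonic if $\bar x\le \bar y$ componentwise implies $h(\bar x)\le h(\bar y)$. Each reviewer $i$ has a monotonic $h_i$ with $y_{ia}=h_i(\bar x_{ia})$ for all $a$. The $L(p,q)$-aggregation method ($p,q\in[1,\infty)$): (1) ERM step: find a monotonic $\hat h:[0,10]^d\to[0,10]$ minimizing $\big[\sum_{i\in\mathcal{R}}\big(\sum_{a\in\mathcal{P}}|y_{ia}-h(\bar x_{ia})|^p\big)^{q/p}\big]^{1/q}$ over all monotonic $h$ (only the finitely many values $h(\bar x_{ia})$ matter); among minimizers, the one whose value vector $(\hat h(\bar x_{ia}))_{i,a}$ has smallest Euclidean norm is chosen. Put $\hat y_{ia}=\hat h(\bar x_{ia})$. (2) Aggregation step: the solution $(s_a)_{a\in\mathcal{P}}$ minimizes $\big[\sum_{i\in\mathcal{R}}\big(\sum_{a\in\mathcal{P}}|\hat y_{ia}-s_a|^p\big)^{q/p}\big]^{1/q}$ (ties broken by smallest Euclidean norm).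 Objectivity Assumption: $\bar x_{ia}=\bar x_{ja}$ for all $i,j\in\mathcal R$ and all $a\in\mathcal P$. Axioms (a method satisfies an axiom if the stated property holds for every admissible data set): Consensus: if for a paper $a$ we have $y_{ia}=y$ for all $i\in\mathcal R$, then $s_a=y$. Paper $a$ dominates paper $b$ if there is a permutation $\pi$ of $\mathcal R$ with $y_{ia}\ge y_{\pi(i)b}$ for all $i$; the domination is strict if at least one of these inequalities is strict. Efficiency: whenever $a$ dominates $b$, $s_a\ge s_b$. Consistency: Efficiency holds and, whenever $a$ strictly dominates $b$, $s_a>s_b$. *)

theory Defs
  imports Complex_Main
begin

(* Reviewers: finite type 'r; papers: finite type 'p; criteria: finite type 'c (d = CARD('c) >= 1).
   Score vectors are functions 'c => real; the order on them is the componentwise order (le_fun). *)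

definition in_box :: "('c \<Rightarrow> real) \<Rightarrow> bool" where
  "in_box v \<longleftrightarrow> (\<forall>c. 0 \<le> v c \<and> v c \<le> 10)"

definition monotonic :: "(('c \<Rightarrow> real) \<Rightarrow> real) \<Rightarrow> bool" where
  "monotonic h \<longleftrightarrow> (\<forall>v. in_box v \<longrightarrow> 0 \<le> h v \<and> h v \<le> 10) \<and>
                   (\<forall>v w. in_box v \<longrightarrow> in_box w \<longrightarrow> v \<le> w \<longrightarrow> h v \<le> h w)"

definition admissible ::
  "('r::finite \<Rightarrow> 'p::finite \<Rightarrow> 'c::finite \<Rightarrow> real) \<Rightarrow> ('r \<Rightarrow> 'p \<Rightarrow> real) \<Rightarrow> bool" where
  "admissible x y \<longleftrightarrow> (\<forall>i a. in_box (x i a) \<and> 0 \<le> y i a \<and> y i a \<le> 10) \<and>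
                       (\<forall>i. \<exists>h. monotonic h \<and> (\<forall>a. y i a = h (x i a)))"

definition objectivity :: "('r \<Rightarrow> 'p \<Rightarrow> 'c \<Rightarrow> real) \<Rightarrow> bool" where
  "objectivity x \<longleftrightarrow> (\<forall>i j a. x i a = x j a)"

definition Lpq :: "real \<Rightarrow> real \<Rightarrow> ('r::finite \<Rightarrow> 'p::finite \<Rightarrow> real) \<Rightarrow> ('r \<Rightarrow> 'p \<Rightarrow> real) \<Rightarrow> real" where
  "Lpq p q u v = (\<Sum>i\<in>UNIV. (\<Sum>a\<in>UNIV. \<bar>u i a - v i a\<bar> powr p) powr (q / p)) powr (1 / q)"

definition feasible_values ::
  "('r \<Rightarrow> 'p \<Rightarrow> 'c \<Rightarrow> real) \<Rightarrow> ('r \<Rightarrow> 'p \<Rightarrow> real) set" where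
  "feasible_values x = {v. \<exists>h. monotonic h \<and> (\<forall>i a. v i a = h (x i a))}"

definition erm_output :: "real \<Rightarrow> real \<Rightarrow> ('r::finite \<Rightarrow> 'p::finite \<Rightarrow> 'c \<Rightarrow> real) \<Rightarrow>
    ('r \<Rightarrow> 'p \<Rightarrow> real) \<Rightarrow> ('r \<Rightarrow> 'p \<Rightarrow> real) \<Rightarrow> bool" where
  "erm_output p q x y yhat \<longleftrightarrow>
     yhat \<in> feasible_values x \<and>
     (\<forall>w\<in>feasible_values x. Lpq p q y yhat \<le> Lpq p q y w) \<and>
     (\<forall>w\<in>feasible_values x. Lpq p q y w = Lpq p q y yhat \<longrightarrow>
        (\<Sum>i\<in>UNIV. \<Sum>a\<in>UNIV. (yhat i a)\<^sup>2) \<le> (\<Sum>i\<in>UNIV. \<Sum>a\<in>UNIV. (w i a)\<^sup>2))"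

definition agg_output :: "real \<Rightarrow> real \<Rightarrow> ('r::finite \<Rightarrow> 'p::finite \<Rightarrow> real) \<Rightarrow> ('p \<Rightarrow> real) \<Rightarrow> bool" where
  "agg_output p q yhat s \<longleftrightarrow>
     (\<forall>t. Lpq p q yhat (\<lambda>i a. s a) \<le> Lpq p q yhat (\<lambda>i a. t a)) \<and>
     (\<forall>t. Lpq p q yhat (\<lambda>i a. t a) = Lpq p q yhat (\<lambda>i a. s a) \<longrightarrow>
        (\<Sum>a\<in>UNIV. (s a)\<^sup>2) \<le> (\<Sum>a\<in>UNIV. (t a)\<^sup>2))"

definition Lpq_method :: "real \<Rightarrow> real \<Rightarrow> ('r::finite \<Rightarrow> 'p::finite \<Rightarrow> 'c \<Rightarrow> real) \<Rightarrow>
    ('r \<Rightarrow> 'p \<Rightarrow> real) \<Rightarrow> ('p \<Rightarrow> real) \<Rightarrow> bool" where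
  "Lpq_method p q x y s \<longleftrightarrow> (\<exists>yhat. erm_output p q x y yhat \<and> agg_output p q yhat s)"

definition dominates :: "('r \<Rightarrow> 'p \<Rightarrow> real) \<Rightarrow> 'p \<Rightarrow> 'p \<Rightarrow> bool" where
  "dominates y a b \<longleftrightarrow> (\<exists>\<pi>. bij \<pi> \<and> (\<forall>i. y i a \<ge> y (\<pi> i) b))"

definition strictly_dominates :: "('r \<Rightarrow> 'p \<Rightarrow> real) \<Rightarrow> 'p \<Rightarrow> 'p \<Rightarrow> bool" where
  "strictly_dominates y a b \<longleftrightarrow>
     (\<exists>\<pi>. bij \<pi> \<and> (\<forall>i. y i a \<ge> y (\<pi> i) b) \<and> (\<exists>i. y i a > y (\<pi> i) b))"

definition consensus :: "('r \<Rightarrow> 'p \<Rightarrow> real) \<Rightarrow> ('p \<Rightarrow> real) \<Rightarrow> bool" where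
  "consensus y s \<longleftrightarrow> (\<forall>a c. (\<forall>i. y i a = c) \<longrightarrow> s a = c)"

definition efficiency :: "('r \<Rightarrow> 'p \<Rightarrow> real) \<Rightarrow> ('p \<Rightarrow> real) \<Rightarrow> bool" where
  "efficiency y s \<longleftrightarrow> (\<forall>a b. dominates y a b \<longrightarrow> s a \<ge> s b)"

definition consistency :: "('r \<Rightarrow> 'p \<Rightarrow> real) \<Rightarrow> ('p \<Rightarrow> real) \<Rightarrow> bool" where
  "consistency y s \<longleftrightarrow> efficiency y s \<and> (\<forall>a b. strictly_dominates y a b \<longrightarrow> s a > s b)"

end

theory Submission
  imports Defs
begin

definition psi :: "real \<Rightarrow> real \<Rightarrow> real" where
  "psi p u = sgn u * \<bar>u\<bar> powr (p - 1)"

lemma deriv_phi: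
  assumes p: "1 < p"
  shows "((\<lambda>u. \<bar>u\<bar> powr p) has_real_derivative p * psi p u) (at u)"
proof (cases "u = 0")
  case True
  have "((\<lambda>h. (\<bar>0 + h\<bar> powr p - \<bar>0\<bar> powr p) / h) \<longlongrightarrow> 0) (at 0)"
  proof (rule tendsto_0_le[where K=1])
    show "((\<lambda>h. \<bar>h\<bar> powr (p - 1)) \<longlongrightarrow> 0) (at (0::real))"
      using p by (intro tendsto_zero_powrI tendsto_intros) (auto intro: tendsto_eq_intros)
    show "\<forall>\<^sub>F h in at 0. norm ((\<bar>0 + h\<bar> powr p - \<bar>0\<bar> powr p) / h) \<le> norm (\<bar>h\<bar> powr (p - 1)) * 1"
    proof -
      have "\<bar>\<bar>h\<bar> powr p / h\<bar> \<le> \<bar>h\<bar> powr (p - 1)" if "h \<noteq> 0" for h :: real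
      proof -
      from that have "\<bar>h\<bar> powr p = \<bar>h\<bar> * \<bar>h\<bar> powr (p - 1)"
        by (metis abs_ge_zero add.commute diff_add_cancel powr_add powr_one)
      then show "\<bar>\<bar>h\<bar> powr p / h\<bar> \<le> \<bar>h\<bar> powr (p - 1)"
        using \<open>h \<noteq> 0\<close> by (simp add: abs_mult)
    qed
    then show ?thesis unfolding eventually_at_filter by (auto intro!: always_eventually)
    qed
  qed
  then show ?thesis using True p by (simp add: has_field_derivative_iff psi_def)
next
  case False
  show ?thesis
  proof (cases "u > 0")
    case True
    have ev: "eventually (\<lambda>v. \<bar>v\<bar> powr p = v powr p) (nhds u)"
      using eventually_nhds_in_open[of "{0<..}" u] True
      by (auto elim!: eventually_mono)
    have "((\<lambda>v. v powr p) has_real_derivative p * u powr (p - 1)) (at u)"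
      using has_real_derivative_powr[OF True] .
    then show ?thesis using True
      by (subst DERIV_cong_ev[OF refl ev]) (auto simp: psi_def)
  next
    case neg: False
    with False have u: "u < 0" by simp
    have ev: "eventually (\<lambda>v. \<bar>v\<bar> powr p = (- v) powr p) (nhds u)"
      using eventually_nhds_in_open[of "{..<0}" u] u
      by (auto elim!: eventually_mono)
    have "((\<lambda>v. (- v) powr p) has_real_derivative p * (-u) powr (p - 1) * (-1)) (at u)"
      using u by (auto intro!: derivative_eq_intros)
    then show ?thesis using u
      by (subst DERIV_cong_ev[OF refl ev]) (auto simp: psi_def)
  qed
qed

lemma psi_strict_mono:
  assumes p: "1 < p" and "u < v"
  shows "psi p u < psi p v"
proof -
  have pos: "0 < p - 1" using p by simp
  consider "0 \<le> u" | "u < 0 \<and> v \<le> 0" | "u < 0 \<and> 0 < v" by linarith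
  then show ?thesis
  proof cases
    case 1
    then have "u powr (p-1) < v powr (p-1)" using assms pos by (intro powr_less_mono2) auto
    then show ?thesis using 1 assms by (auto simp: psi_def sgn_if)
  next
    case 2
    then have "(-v) powr (p-1) < (-u) powr (p-1)" using assms pos by (intro powr_less_mono2) auto
    then show ?thesis using 2 assms by (auto simp: psi_def sgn_if)
  next
    case 3
    have "0 < (-u) powr (p-1)" "0 < v powr (p-1)" using 3 by auto
    moreover have "psi p u = -((-u) powr (p-1))" "psi p v = v powr (p-1)" using 3 by (auto simp: psi_def)
    ultimately show ?thesis by linarith
  qed
qed


lemma deriv_G:
  fixes Y :: "'r::finite \<Rightarrow> real"
  assumes p: "1 < p"
  shows "((\<lambda>t. \<Sum>i\<in>UNIV. \<bar>Y i - t\<bar> powr p) has_real_derivative (\<Sum>i\<in>UNIV. p * psi p (Y i - t) * (-1))) (at t)"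
proof (rule DERIV_sum)
  fix i :: 'r
  have "((\<lambda>t. Y i - t) has_real_derivative (-1)) (at t)"
    by (auto intro!: derivative_eq_intros)
  from DERIV_chain2[OF deriv_phi[OF p] this]
  show "((\<lambda>t. \<bar>Y i - t\<bar> powr p) has_real_derivative p * psi p (Y i - t) * (-1)) (at t)" .
qed

lemma foc:
  fixes Y :: "'r::finite \<Rightarrow> real"
  assumes p: "1 < p" and min: "\<forall>s. (\<Sum>i\<in>UNIV. \<bar>Y i - t\<bar> powr p) \<le> (\<Sum>i\<in>UNIV. \<bar>Y i - s\<bar> powr p)"
  shows "(\<Sum>i\<in>UNIV. psi p (Y i - t)) = 0"
proof -
  have "(\<Sum>i\<in>UNIV. p * psi p (Y i - t) * (-1)) = 0"
    using DERIV_local_min[OF deriv_G[OF p], of 1] min by auto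
  then have "- p * (\<Sum>i\<in>UNIV. psi p (Y i - t)) = 0"
    by (simp add: sum_distrib_left algebra_simps sum_negf)
  then show ?thesis using p by simp
qed

lemma G_cont:
  fixes Y :: "'r::finite \<Rightarrow> real"
  assumes p: "1 < p"
  shows "continuous_on A (\<lambda>t. \<Sum>i\<in>UNIV. \<bar>Y i - t\<bar> powr p)"
  by (intro continuous_at_imp_continuous_on ballI DERIV_isCont[OF deriv_G[OF p]])

lemma G_exists:
  fixes Y :: "'r::finite \<Rightarrow> real"
  assumes p: "1 < p" and Y: "\<forall>i. 0 \<le> Y i \<and> Y i \<le> 10"
  shows "\<exists>t. 0 \<le> t \<and> t \<le> 10 \<and> (\<forall>s. (\<Sum>i\<in>UNIV. \<bar>Y i - t\<bar> powr p) \<le> (\<Sum>i\<in>UNIV. \<bar>Y i - s\<bar> powr p))"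
proof -
  obtain t where t: "t \<in> {0..10}" and tmin: "\<forall>s\<in>{0..10}. (\<Sum>i\<in>UNIV. \<bar>Y i - t\<bar> powr p) \<le> (\<Sum>i\<in>UNIV. \<bar>Y i - s\<bar> powr p)"
    using continuous_attains_inf[OF compact_Icc[of 0 10] _ G_cont[OF p, where Y=Y and A="{0..10}"]] by auto
  have "(\<Sum>i\<in>UNIV. \<bar>Y i - t\<bar> powr p) \<le> (\<Sum>i\<in>UNIV. \<bar>Y i - s\<bar> powr p)" for s
  proof -
    define c where "c = max 0 (min 10 s)"
    have "c \<in> {0..10}" by (auto simp: c_def)
    then have "(\<Sum>i\<in>UNIV. \<bar>Y i - t\<bar> powr p) \<le> (\<Sum>i\<in>UNIV. \<bar>Y i - c\<bar> powr p)" using tmin by auto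
    also have "\<dots> \<le> (\<Sum>i\<in>UNIV. \<bar>Y i - s\<bar> powr p)"
    proof (rule sum_mono)
      fix i
      have "\<bar>Y i - c\<bar> \<le> \<bar>Y i - s\<bar>" using Y[rule_format, of i] by (auto simp: c_def)
      then show "\<bar>Y i - c\<bar> powr p \<le> \<bar>Y i - s\<bar> powr p" using p by (intro powr_mono2) auto
    qed
    finally show ?thesis .
  qed
  then show ?thesis using t by auto
qed

lemma compare:
  fixes Y Y' :: "'r::finite \<Rightarrow> real"
  assumes p: "1 < p" and f1: "(\<Sum>i\<in>UNIV. psi p (Y i - t)) = 0"
    and f2: "(\<Sum>i\<in>UNIV. psi p (Y' i - t')) = 0"
    and le: "\<forall>i. Y i \<le> Y' i"
  shows "t \<le> t'" and "(\<exists>i. Y i < Y' i) \<Longrightarrow> t < t'"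
proof -
  have mono: "psi p u \<le> psi p v" if "u \<le> v" for u v
    using psi_strict_mono[OF p, of u v] that by (cases "u = v") auto
  show "t \<le> t'"
  proof (rule ccontr)
    assume nt: "\<not> t \<le> t'"
    have "Y i - t < Y' i - t'" for i using le[rule_format, of i] nt by linarith
    then have "(\<Sum>i\<in>UNIV. psi p (Y i - t)) < (\<Sum>i\<in>UNIV. psi p (Y' i - t'))"
      by (intro sum_strict_mono psi_strict_mono[OF p]) auto
    then show False using f1 f2 by simp
  qed
  assume "\<exists>i. Y i < Y' i"
  then obtain k where k: "Y k < Y' k" by auto
  show "t < t'"
  proof (rule ccontr)
    assume nt: "\<not> t < t'"
    have a1: "Y i - t \<le> Y' i - t'" for i using le[rule_format, of i] nt by linarith
    have a2: "Y k - t < Y' k - t'" using k nt by linarith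
    have "(\<Sum>i\<in>UNIV. psi p (Y i - t)) < (\<Sum>i\<in>UNIV. psi p (Y' i - t'))"
      using a1 a2 by (intro sum_strict_mono_ex1) (auto intro!: mono psi_strict_mono[OF p])
    then show False using f1 f2 by simp
  qed
qed


lemma Lpq_nonneg: "0 \<le> Lpq p q u v"
  by (simp add: Lpq_def)

lemma Lpq_self: "Lpq p q u u = 0"
  by (simp add: Lpq_def)

lemma Lpq_zero:
  assumes "0 < p" "0 < q" "Lpq p q u v = 0"
  shows "u i a = v i a"
proof -
  have "(\<Sum>i\<in>UNIV. (\<Sum>a\<in>UNIV. \<bar>u i a - v i a\<bar> powr p) powr (q / p)) = 0"
    using assms by (simp add: Lpq_def)
  then have "(\<Sum>a\<in>UNIV. \<bar>u i a - v i a\<bar> powr p) powr (q / p) = 0"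
    by (subst (asm) sum_nonneg_eq_0_iff) auto
  then have "(\<Sum>a\<in>UNIV. \<bar>u i a - v i a\<bar> powr p) = 0" by simp
  then have "\<bar>u i a - v i a\<bar> powr p = 0"
    by (subst (asm) sum_nonneg_eq_0_iff) auto
  then show ?thesis by simp
qed

lemma Lpq_strict:
  assumes p: "0 < p" and q: "0 < q"
    and le: "\<forall>i a. \<bar>u i a - v' i a\<bar> \<le> \<bar>u i a - v i a\<bar>"
    and lt: "\<bar>u i0 a0 - v' i0 a0\<bar> < \<bar>u i0 a0 - v i0 a0\<bar>"
  shows "Lpq p q u v' < Lpq p q u v"
proof -
  have inner_le: "(\<Sum>a\<in>UNIV. \<bar>u i a - v' i a\<bar> powr p) \<le> (\<Sum>a\<in>UNIV. \<bar>u i a - v i a\<bar> powr p)" for i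
    using le p by (intro sum_mono powr_mono2) auto
  have inner_lt: "(\<Sum>a\<in>UNIV. \<bar>u i0 a - v' i0 a\<bar> powr p) < (\<Sum>a\<in>UNIV. \<bar>u i0 a - v i0 a\<bar> powr p)"
    using le p lt by (intro sum_strict_mono_ex1) (auto intro!: powr_mono2 powr_less_mono2)
  have outer: "(\<Sum>i\<in>UNIV. (\<Sum>a\<in>UNIV. \<bar>u i a - v' i a\<bar> powr p) powr (q / p))
      < (\<Sum>i\<in>UNIV. (\<Sum>a\<in>UNIV. \<bar>u i a - v i a\<bar> powr p) powr (q / p))"
    using inner_le inner_lt p q
    by (intro sum_strict_mono_ex1) (auto intro!: powr_mono2 powr_less_mono2 sum_nonneg)
  show ?thesis unfolding Lpq_def
    using outer q by (intro powr_less_mono2) (auto intro!: sum_nonneg)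
qed

lemma Lpq_pp:
  assumes "0 < p"
  shows "Lpq p p u v = (\<Sum>i\<in>UNIV. \<Sum>a\<in>UNIV. \<bar>u i a - v i a\<bar> powr p) powr (1 / p)"
  using assms unfolding Lpq_def by (simp add: sum_nonneg)


theorem theorem3p1:
  fixes p q :: real
    and x :: "'r::finite \<Rightarrow> 'p::finite \<Rightarrow> 'c::finite \<Rightarrow> real"
    and y :: "'r \<Rightarrow> 'p \<Rightarrow> real"
    and s :: "'p \<Rightarrow> real"
  assumes "1 < p" and "1 < q"
    and "admissible x y"
    and "objectivity x"
    and "Lpq_method p q x y s"
  shows "consensus y s \<and> (p = q \<longrightarrow> consistency y s)"
proof -
  note p = \<open>1 < p\<close> and q = \<open>1 < q\<close>
  obtain yhat where erm: "erm_output p q x y yhat" and agg: "agg_output p q yhat s"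
    using assms(5) by (auto simp: Lpq_method_def)
  obtain H where Hm: "monotonic H" and Hy: "\<forall>i a. yhat i a = H (x i a)"
    using erm by (auto simp: erm_output_def feasible_values_def)
  define X where "X a = x undefined a" for a
  have xX: "x i a = X a" for i a
    using assms(4) by (simp add: objectivity_def X_def)
  define z where "z a = H (X a)" for a
  have yhat_z: "yhat = (\<lambda>i a. z a)" using Hy by (auto simp: z_def xX)
  have box: "in_box (X a)" and y01: "0 \<le> y i a \<and> y i a \<le> 10" for i a
    using assms(3) by (auto simp: admissible_def X_def)
  obtain hs where hs: "\<forall>i. monotonic (hs i) \<and> (\<forall>a. y i a = hs i (x i a))"
    using assms(3) unfolding admissible_def by metis
  have yhs: "y i a = hs i (X a)" for i a using hs by (simp add: xX)
  have hsmono: "X a \<le> X b \<Longrightarrow> y i a \<le> y i b" for i a b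
    using hs box unfolding yhs monotonic_def by blast
  have ermmin: "\<And>w. w \<in> feasible_values x \<Longrightarrow> Lpq p q y yhat \<le> Lpq p q y w"
    using erm by (auto simp: erm_output_def)
  have "Lpq p q yhat (\<lambda>i a. s a) \<le> Lpq p q yhat (\<lambda>i a. z a)"
    using agg by (auto simp: agg_output_def)
  then have "Lpq p q yhat (\<lambda>i a. s a) = 0"
    using Lpq_nonneg[of p q yhat "\<lambda>i a. s a"] by (simp add: yhat_z Lpq_self)
  then have sz: "s = z"
    using Lpq_zero[of p q yhat "\<lambda>i a. s a"] p q by (auto simp: yhat_z)
  have cons: "consensus y s"
    unfolding consensus_def sz
  proof (intro allI impI)
    fix a0 c assume yc: "\<forall>i. y i a0 = c"
    have c01: "0 \<le> c" "c \<le> 10" using y01[of undefined a0] yc by auto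
    show "z a0 = c"
    proof (rule ccontr)
      assume ne: "z a0 \<noteq> c"
      define h' where "h' v = (if v = X a0 then c else if X a0 \<le> v then max (H v) c
          else if v \<le> X a0 then min (H v) c else H v)" for v
      have h'm: "monotonic h'"
        unfolding monotonic_def
      proof (intro conjI allI impI)
        fix v :: "'c \<Rightarrow> real" assume "in_box v"
        then show "0 \<le> h' v" "h' v \<le> 10" using Hm c01 by (auto simp: h'_def monotonic_def)
      next
        fix v w :: "'c \<Rightarrow> real" assume v: "in_box v" and w: "in_box w" and vw: "v \<le> w"
        have Hvw: "H v \<le> H w" using Hm v w vw by (auto simp: monotonic_def)
        show "h' v \<le> h' w"
        proof (cases "v = X a0")
          case True then show ?thesis using vw by (auto simp: h'_def)
        next
          case vne: False
          show ?thesis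
          proof (cases "X a0 \<le> v")
            case True
            then have "X a0 \<le> w" "w \<noteq> X a0" using vw vne by (auto dest: order_trans antisym)
            then show ?thesis using True vne Hvw by (auto simp: h'_def)
          next
            case nv: False
            show ?thesis
            proof (cases "v \<le> X a0")
              case True
              then show ?thesis using nv vne Hvw by (auto simp: h'_def)
            next
              case False
              have "\<not> w \<le> X a0" using False vw by (auto dest: order_trans)
              moreover have "w \<noteq> X a0" using False vw by auto
              ultimately show ?thesis using nv vne False Hvw by (auto simp: h'_def)
            qed
          qed
        qed
      qed
      define w where "w i b = h' (x i b)" for i b
      have wf: "w \<in> feasible_values x" using h'm by (auto simp: feasible_values_def w_def)
      have le: "\<forall>i b. \<bar>y i b - w i b\<bar> \<le> \<bar>y i b - yhat i b\<bar>"
      proof (intro allI)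
        fix i b
        have ya0: "y i a0 = c" using yc by simp
        have up: "X a0 \<le> X b \<Longrightarrow> c \<le> y i b" using hsmono ya0 by metis
        have down: "X b \<le> X a0 \<Longrightarrow> y i b \<le> c" using hsmono ya0 by metis
        have eq: "X b = X a0 \<Longrightarrow> y i b = c" using yhs ya0 by metis
        show "\<bar>y i b - w i b\<bar> \<le> \<bar>y i b - yhat i b\<bar>"
          using up down eq by (auto simp: w_def h'_def xX yhat_z z_def)
      qed
      have lt: "\<bar>y undefined a0 - w undefined a0\<bar> < \<bar>y undefined a0 - yhat undefined a0\<bar>"
        using ne yc by (auto simp: w_def h'_def xX yhat_z)
      have "Lpq p q y w < Lpq p q y yhat"
        using Lpq_strict[OF _ _ le lt] p q by auto
      then show False using ermmin[OF wf] by auto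
    qed
  qed
  have consist: "consistency y s" if pq: "p = q"
  proof -
    define G where "G v t = (\<Sum>i\<in>UNIV. \<bar>hs i v - t\<bar> powr p)" for v t
    define M where "M v = (SOME t. 0 \<le> t \<and> t \<le> 10 \<and> (\<forall>s. G v t \<le> G v s))" for v
    have Mprop: "0 \<le> M v \<and> M v \<le> 10 \<and> (\<forall>s. G v (M v) \<le> G v s)" if "in_box v" for v
    proof -
      have "\<forall>i. 0 \<le> hs i v \<and> hs i v \<le> 10" using hs that by (auto simp: monotonic_def)
      from G_exists[OF p this] show ?thesis unfolding M_def G_def by (rule someI_ex)
    qed
    have Mfoc: "(\<Sum>i\<in>UNIV. psi p (hs i v - M v)) = 0" if "in_box v" for v
      using foc[OF p, of "\<lambda>i. hs i v" "M v"] Mprop[OF that] unfolding G_def by blast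
    have Mm: "monotonic M"
      unfolding monotonic_def
    proof (intro conjI allI impI)
      fix v :: "'c \<Rightarrow> real" assume "in_box v" then show "0 \<le> M v" "M v \<le> 10" using Mprop by auto
    next
      fix v w :: "'c \<Rightarrow> real" assume v: "in_box v" and w: "in_box w" and vw: "v \<le> w"
      have "\<forall>i. hs i v \<le> hs i w" using hs v w vw by (auto simp: monotonic_def)
      from compare(1)[OF p Mfoc[OF v] Mfoc[OF w] this] show "M v \<le> M w" .
    qed
    define m where "m i b = M (x i b)" for i b
    have mf: "m \<in> feasible_values x" using Mm by (auto simp: feasible_values_def m_def)
    have "Lpq p p y yhat \<le> Lpq p p y m" using ermmin[OF mf] pq by simp
    then have PP: "(\<Sum>i\<in>UNIV. \<Sum>a\<in>UNIV. \<bar>y i a - yhat i a\<bar> powr p) powr (1 / p)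
        \<le> (\<Sum>i\<in>UNIV. \<Sum>a\<in>UNIV. \<bar>y i a - m i a\<bar> powr p) powr (1 / p)"
      using p by (simp only: Lpq_pp)
    have S: "(\<Sum>i\<in>UNIV. \<Sum>a\<in>UNIV. \<bar>y i a - yhat i a\<bar> powr p)
        \<le> (\<Sum>i\<in>UNIV. \<Sum>a\<in>UNIV. \<bar>y i a - m i a\<bar> powr p)" (is "?A \<le> ?B")
    proof (rule ccontr)
      assume "\<not> ?A \<le> ?B"
      then have "?B < ?A" by simp
      then have "?B powr (1/p) < ?A powr (1/p)"
        using p by (intro powr_less_mono2) (auto intro!: sum_nonneg)
      then show False using PP by simp
    qed
    have S2: "(\<Sum>b\<in>UNIV. G (X b) (z b)) \<le> (\<Sum>b\<in>UNIV. G (X b) (M (X b)))"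
      using S unfolding G_def by (subst (1 2) sum.swap) (simp add: yhat_z m_def xX yhs)
    have Gmin: "G (X b) (M (X b)) \<le> G (X b) t" for b t using Mprop[OF box] by auto
    have zmin: "G (X b) (z b) \<le> G (X b) t" for b t
    proof -
      have "G (X b) (z b) \<le> G (X b) (M (X b))"
      proof (rule ccontr)
        assume "\<not> ?thesis"
        then have "G (X b) (M (X b)) < G (X b) (z b)" by simp
        then have "(\<Sum>b\<in>UNIV. G (X b) (M (X b))) < (\<Sum>b\<in>UNIV. G (X b) (z b))"
          using Gmin by (intro sum_strict_mono_ex1) auto
        then show False using S2 by simp
      qed
      then show ?thesis using Gmin[of b t] by simp
    qed
    have zfoc: "(\<Sum>i\<in>UNIV. psi p (y i b - z b)) = 0" for b
    proof -
      have "\<forall>t. (\<Sum>i\<in>UNIV. \<bar>y i b - z b\<bar> powr p) \<le> (\<Sum>i\<in>UNIV. \<bar>y i b - t\<bar> powr p)"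
        using zmin[of b] unfolding G_def yhs[symmetric] by blast
      then show ?thesis using foc[OF p, of "\<lambda>i. y i b" "z b"] by blast
    qed
    have key: "z b \<le> z a \<and> ((\<exists>i. y (\<pi> i) b < y i a) \<longrightarrow> z b < z a)"
      if "bij \<pi>" "\<forall>i. y (\<pi> i) b \<le> y i a" for \<pi> a b
    proof -
      have "(\<Sum>i\<in>UNIV. psi p (y (\<pi> i) b - z b)) = (\<Sum>i\<in>UNIV. psi p (y i b - z b))"
        using sum.reindex_bij_betw[of \<pi> UNIV UNIV "\<lambda>i. psi p (y i b - z b)"] that(1)
        by (simp add: bij_betw_def bij_def)
      then have f1: "(\<Sum>i\<in>UNIV. psi p (y (\<pi> i) b - z b)) = 0" using zfoc by simp
      show ?thesis using compare[OF p f1 zfoc[of a]] that(2) by auto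
    qed
    show ?thesis
      unfolding consistency_def efficiency_def dominates_def strictly_dominates_def sz
      using key by (metis less_eq_real_def)
  qed
  show ?thesis using cons consist by auto
qed

end
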